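(* Let $n,m\in\mathbb{N}$ and let $(\boldsymbol{d},\boldsymbol{k})$, with $\boldsymbol{d}=(d_1,\dots,d_n)$ and $\boldsymbol{k}=(k_1,\dots,k_m)$ nonnegative integer sequences, be a bipartite degree sequence for the bipartition $X=\{x_1,\dots,x_n\}$, $Y=\{y_1,\dots,y_m\}$. Suppose $g,h\in[n]$ satisfy $d_g\geq d_h+2$, and define $\boldsymbol{d}'$ by $d'_g=d_g-1$, $d'_h=d_h+1$ and $d'_i=d_i$ for $i\in[n]\setminus\{g,h\}$. Then \[|\mathcal{B}(\boldsymbol{d},\boldsymbol{k})|\leq|\mathcal{B}(\boldsymbol{d}',\boldsymbol{k})|.\]
   Context: $\mathcal{B}(\boldsymbol{d},\boldsymbol{k})$ denotes the set of all simple bipartite graphs $B$ with the fixed bipartition $X,Y$ (edges only between $X$ and $Y$) such that $\deg_B(x_i)=d_i$ for all $i\in[n]$ and $\deg_B(y_j)=k_j$ for all $j\in[m]$. *)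

theory Defs
  imports Main
begin

text \<open>X = {x_0,...,x_{n-1}} and Y = {y_0,...,y_{m-1}} are indexed by {0..<n} and {0..<m}.
A simple bipartite graph with this fixed bipartition is a set of pairs (i,j), meaning
the edge x_i y_j.  Degree sequences are functions nat => nat, only values below n resp. m matter.\<close>

definition bip_graphs :: "nat \<Rightarrow> nat \<Rightarrow> (nat \<Rightarrow> nat) \<Rightarrow> (nat \<Rightarrow> nat) \<Rightarrow> (nat \<times> nat) set set" where
  "bip_graphs n m d k =
     {E. E \<subseteq> {0..<n} \<times> {0..<m}
         \<and> (\<forall>i<n. card {j. (i, j) \<in> E} = d i)
         \<and> (\<forall>j<m. card {i. (i, j) \<in> E} = k j)}"

definition is_bip_degree_seq :: "nat \<Rightarrow> nat \<Rightarrow> (nat \<Rightarrow> nat) \<Rightarrow> (nat \<Rightarrow> nat) \<Rightarrow> bool" where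
  "is_bip_degree_seq n m d k \<longleftrightarrow> bip_graphs n m d k \<noteq> {}"

end

theory Submission
  imports Defs
begin

lemma choose_step_le:
  fixes N q :: nat
  assumes "N \<le> 2 * q"
  shows "N choose Suc q \<le> N choose q"
proof (cases "N \<le> q")
  case True
  then show ?thesis by (simp add: binomial_eq_0)
next
  case False
  then obtain b where b: "N = Suc (q + b)" by (metis add_Suc_right less_imp_Suc_add not_le)
  have e: "Suc q * (N choose Suc q) = Suc b * (N choose q)"
    using Suc_times_binomial_add[of q b] b by simp
  have "Suc b \<le> Suc q" using b assms by simp
  then have "Suc q * (N choose Suc q) \<le> Suc q * (N choose q)"
    unfolding e by (rule mult_right_mono) simp
  then show ?thesis by (metis mult_le_cancel1 zero_less_Suc)
qed

definition rowset :: "(nat \<times> nat) set \<Rightarrow> nat \<Rightarrow> nat set" where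
  "rowset E i = {j. (i, j) \<in> E}"

definition build :: "nat \<Rightarrow> nat \<Rightarrow> (nat \<times> nat) set \<Rightarrow> nat set \<Rightarrow> nat set \<Rightarrow> nat set \<Rightarrow> (nat \<times> nat) set" where
  "build g h R I D S = R \<union> ({g} \<times> (I \<union> S)) \<union> ({h} \<times> (I \<union> (D - S)))"

definition keyof :: "nat \<Rightarrow> nat \<Rightarrow> (nat \<times> nat) set \<Rightarrow> (nat \<times> nat) set \<times> nat set \<times> nat set" where
  "keyof g h E = (E - ({g, h} \<times> UNIV), rowset E g \<inter> rowset E h,
                  (rowset E g - rowset E h) \<union> (rowset E h - rowset E g))"

definition partof :: "nat \<Rightarrow> nat \<Rightarrow> (nat \<times> nat) set \<Rightarrow> nat set" where
  "partof g h E = rowset E g - rowset E h"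

lemma recon:
  assumes "g \<noteq> h"
  shows "build g h (E - ({g, h} \<times> UNIV)) (rowset E g \<inter> rowset E h)
          ((rowset E g - rowset E h) \<union> (rowset E h - rowset E g)) (rowset E g - rowset E h) = E"
  using assms unfolding build_def rowset_def by auto

lemma key_build:
  assumes "g \<noteq> h" "R \<inter> ({g, h} \<times> UNIV) = {}" "I \<inter> D = {}" "S \<subseteq> D"
  shows "keyof g h (build g h R I D S) = (R, I, D)" "partof g h (build g h R I D S) = S"
  using assms unfolding keyof_def partof_def build_def rowset_def by auto

lemma card_split2:
  fixes X :: "nat set"
  assumes "finite X" "g \<noteq> h"
  shows "card X = card (X - {g, h}) + of_bool (g \<in> X) + of_bool (h \<in> X)"
proof -
  have "X = (X - {g, h}) \<union> (X \<inter> {g, h})" by auto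
  moreover have "card ((X - {g, h}) \<union> (X \<inter> {g, h})) = card (X - {g, h}) + card (X \<inter> {g, h})"
    by (rule card_Un_disjoint) (use assms in auto)
  ultimately have "card X = card (X - {g, h}) + card (X \<inter> {g, h})" by simp
  moreover have "card (X \<inter> {g, h}) = of_bool (g \<in> X) + of_bool (h \<in> X)"
    using assms by (cases "g \<in> X"; cases "h \<in> X") (auto simp: Int_insert_right)
  ultimately show ?thesis by simp
qed

lemma col_card:
  fixes E E' :: "(nat \<times> nat) set"
  assumes "finite {i. (i, j) \<in> E}" "finite {i. (i, j) \<in> E'}" "g \<noteq> h"
    and "\<And>i. i \<noteq> g \<Longrightarrow> i \<noteq> h \<Longrightarrow> ((i, j) \<in> E \<longleftrightarrow> (i, j) \<in> E')"
    and "of_bool ((g, j) \<in> E) + of_bool ((h, j) \<in> E) =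
         (of_bool ((g, j) \<in> E') + of_bool ((h, j) \<in> E') :: nat)"
  shows "card {i. (i, j) \<in> E'} = card {i. (i, j) \<in> E}"
proof -
  have a: "{i. (i, j) \<in> E} - {g, h} = {i. (i, j) \<in> E'} - {g, h}" using assms(4) by auto
  show ?thesis
    using card_split2[OF assms(1) assms(3)] card_split2[OF assms(2) assms(3)] a assms(5) by simp
qed


theorem proposition4p3:
  fixes n m g h :: nat and d k :: "nat \<Rightarrow> nat"
  assumes "is_bip_degree_seq n m d k"
    and "g < n" and "h < n"
    and "d g \<ge> d h + 2"
  shows "card (bip_graphs n m d k)
         \<le> card (bip_graphs n m ((d(g := d g - 1))(h := d h + 1)) k)"
proof -
  define d' where "d' = (d(g := d g - 1))(h := d h + 1)"
  have gh: "g \<noteq> h" using assms(4) by auto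
  define P where "P I D = {S. S \<subseteq> D \<and> card S = d g - card I}" for I D :: "nat set"
  define Q where "Q I D = {S. S \<subseteq> D \<and> card S = d g - card I - 1}" for I D :: "nat set"
  define \<phi> where "\<phi> I D = (SOME f. f ` P I D \<subseteq> Q I D \<and> inj_on f (P I D))" for I D
  define F where "F E = build g h (fst (keyof g h E)) (fst (snd (keyof g h E)))
      (snd (snd (keyof g h E))) (\<phi> (fst (snd (keyof g h E))) (snd (snd (keyof g h E))) (partof g h E))"
    for E
  have main: "F E \<in> bip_graphs n m d' k \<and> keyof g h (F E) = keyof g h E
      \<and> partof g h E \<in> P (fst (snd (keyof g h E))) (snd (snd (keyof g h E)))
      \<and> inj_on (\<phi> (fst (snd (keyof g h E))) (snd (snd (keyof g h E))))
               (P (fst (snd (keyof g h E))) (snd (snd (keyof g h E))))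
      \<and> partof g h (F E) = \<phi> (fst (snd (keyof g h E))) (snd (snd (keyof g h E))) (partof g h E)"
    if E: "E \<in> bip_graphs n m d k" for E
  proof -
    define R where "R = E - ({g, h} \<times> UNIV)"
    define Ng where "Ng = rowset E g"
    define Nh where "Nh = rowset E h"
    define I where "I = Ng \<inter> Nh"
    define D where "D = (Ng - Nh) \<union> (Nh - Ng)"
    define S where "S = Ng - Nh"
    have key: "keyof g h E = (R, I, D)" unfolding keyof_def R_def I_def D_def Ng_def Nh_def by simp
    have part: "partof g h E = S" unfolding partof_def S_def Ng_def Nh_def by simp
    have Esub: "E \<subseteq> {0..<n} \<times> {0..<m}"
      and rows: "\<And>i. i < n \<Longrightarrow> card {j. (i, j) \<in> E} = d i"
      and cols: "\<And>j. j < m \<Longrightarrow> card {i. (i, j) \<in> E} = k j"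
      using E unfolding bip_graphs_def by auto
    have Ngsub: "Ng \<subseteq> {0..<m}" "Nh \<subseteq> {0..<m}" using Esub unfolding Ng_def Nh_def rowset_def by auto
    then have finN: "finite Ng" "finite Nh" by (auto intro: finite_subset)
    have cNg: "card Ng = d g" using rows[OF assms(2)] unfolding Ng_def rowset_def .
    have cNh: "card Nh = d h" using rows[OF assms(3)] unfolding Nh_def rowset_def .
    have finD: "finite D" "finite I" "finite S" using finN unfolding D_def I_def S_def by auto
    have IS: "Ng = I \<union> S" "I \<inter> S = {}" unfolding I_def S_def by auto
    have cS: "card S = d g - card I" using IS finD cNg card_Un_disjoint[of I S] by simp
    have IH: "Nh = I \<union> (D - S)" "I \<inter> (D - S) = {}" unfolding I_def S_def D_def by auto
    have cDS: "card (D - S) = d h - card I" using IH finD cNh card_Un_disjoint[of I "D - S"] by simp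
    have SD: "S \<subseteq> D" unfolding S_def D_def by auto
    have ID: "I \<inter> D = {}" unfolding I_def D_def by auto
    have cD: "card D = card S + card (D - S)" using SD finD card_Diff_subset[of S D] card_mono[of D S] by simp
    have cI: "card I \<le> d h" using cNh finN IH(1) card_mono[of Nh I] by auto
    have SP: "S \<in> P I D" unfolding P_def using SD cS by simp
    have finP: "finite (P I D)" "finite (Q I D)" unfolding P_def Q_def using finD by auto
    have cPQ: "card (P I D) \<le> card (Q I D)"
    proof -
      have "card (P I D) = card D choose (d g - card I)" unfolding P_def using n_subsets[OF finD(1)] by simp
      moreover have "card (Q I D) = card D choose (d g - card I - 1)" unfolding Q_def using n_subsets[OF finD(1)] by simp
      moreover have "card D choose Suc (d g - card I - 1) \<le> card D choose (d g - card I - 1)"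
        by (rule choose_step_le) (use cD cS cDS cI assms(4) in linarith)
      moreover have "Suc (d g - card I - 1) = d g - card I" using cI assms(4) by linarith
      ultimately show ?thesis by simp
    qed
    have "\<exists>f. f ` P I D \<subseteq> Q I D \<and> inj_on f (P I D)" using card_le_inj[OF finP cPQ] .
    then have phi: "\<phi> I D ` P I D \<subseteq> Q I D" "inj_on (\<phi> I D) (P I D)"
      unfolding \<phi>_def by (metis (mono_tags, lifting) someI_ex)+
    define S' where "S' = \<phi> I D S"
    have S'Q: "S' \<in> Q I D" using phi SP unfolding S'_def by auto
    then have S'D: "S' \<subseteq> D" and cS': "card S' = d g - card I - 1" unfolding Q_def by auto
    have FE: "F E = build g h R I D S'" unfolding F_def key part S'_def by simp
    have Rgh: "R \<inter> ({g, h} \<times> UNIV) = {}" unfolding R_def by auto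
    have kF: "keyof g h (F E) = (R, I, D)" "partof g h (F E) = S'"
      unfolding FE using key_build[OF gh Rgh ID S'D] by auto
    have DNg: "D \<subseteq> {0..<m}" "I \<subseteq> {0..<m}" using Ngsub unfolding D_def I_def by auto
    have sub': "F E \<subseteq> {0..<n} \<times> {0..<m}"
      unfolding FE build_def using Esub assms(2,3) DNg S'D unfolding R_def by auto
    have rowg: "{j. (g, j) \<in> F E} = I \<union> S'" unfolding FE build_def R_def using gh by auto
    have rowh: "{j. (h, j) \<in> F E} = I \<union> (D - S')" unfolding FE build_def R_def using gh by auto
    have rowi: "{j. (i, j) \<in> F E} = {j. (i, j) \<in> E}" if "i \<noteq> g" "i \<noteq> h" for i
      unfolding FE build_def R_def using that by auto
    have finS': "finite S'" using S'D finD finite_subset by blast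
    have cg: "card {j. (g, j) \<in> F E} = d' g"
    proof -
      have "card (I \<union> S') = card I + card S'"
        by (rule card_Un_disjoint) (use finD finS' ID S'D in auto)
      then show ?thesis unfolding rowg d'_def using gh cS' cI assms(4) by simp
    qed
    have ch: "card {j. (h, j) \<in> F E} = d' h"
    proof -
      have "card (I \<union> (D - S')) = card I + card (D - S')"
        by (rule card_Un_disjoint) (use finD ID in auto)
      moreover have "card (D - S') = card D - card S'" using card_Diff_subset[OF finS' S'D] .
      moreover have "card S' \<le> card D" using card_mono[OF finD(1) S'D] .
      ultimately show ?thesis unfolding rowh d'_def using gh cS' cI cD cS cDS assms(4) by simp
    qed
    have rows': "\<forall>i<n. card {j. (i, j) \<in> F E} = d' i"
    proof (intro allI impI)
      fix i assume "i < n"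
      show "card {j. (i, j) \<in> F E} = d' i"
      proof (cases "i = g")
        case True then show ?thesis using cg by simp
      next
        case False
        show ?thesis
        proof (cases "i = h")
          case True then show ?thesis using ch by simp
        next
          case False2: False
          then show ?thesis using rowi[OF False False2] rows[OF \<open>i < n\<close>] False
            unfolding d'_def by simp
        qed
      qed
    qed
    have cols': "\<forall>j<m. card {i. (i, j) \<in> F E} = k j"
    proof (intro allI impI)
      fix j assume jm: "j < m"
      have f1: "finite {i. (i, j) \<in> E}"
        by (rule finite_subset[of _ "{0..<n}"]) (use Esub in auto)
      have f2: "finite {i. (i, j) \<in> F E}"
        by (rule finite_subset[of _ "{0..<n}"]) (use sub' in auto)
      have same: "(i, j) \<in> E \<longleftrightarrow> (i, j) \<in> F E" if "i \<noteq> g" "i \<noteq> h" for i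
        using rowi[OF that] by blast
      have gE: "(g, j) \<in> E \<longleftrightarrow> j \<in> I \<union> S" using IS(1) unfolding Ng_def rowset_def by blast
      have hE: "(h, j) \<in> E \<longleftrightarrow> j \<in> I \<union> (D - S)" using IH(1) unfolding Nh_def rowset_def by blast
      have gF: "(g, j) \<in> F E \<longleftrightarrow> j \<in> I \<union> S'" using rowg by blast
      have hF: "(h, j) \<in> F E \<longleftrightarrow> j \<in> I \<union> (D - S')" using rowh by blast
      have "of_bool ((g, j) \<in> E) + of_bool ((h, j) \<in> E) =
         (of_bool ((g, j) \<in> F E) + of_bool ((h, j) \<in> F E) :: nat)"
        unfolding gE hE gF hF using SD S'D ID by auto
      then show "card {i. (i, j) \<in> F E} = k j"
        using col_card[OF f1 f2 gh same] cols[OF jm] by simp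
    qed
    have "F E \<in> bip_graphs n m d' k" unfolding bip_graphs_def using sub' rows' cols' by simp
    then show ?thesis using kF key part SP phi S'_def by simp
  qed
  have inj: "inj_on F (bip_graphs n m d k)"
  proof (rule inj_onI)
    fix E1 E2 assume E1: "E1 \<in> bip_graphs n m d k" and E2: "E2 \<in> bip_graphs n m d k"
      and eq: "F E1 = F E2"
    have k12: "keyof g h E1 = keyof g h E2" using main[OF E1] main[OF E2] eq by metis
    have "partof g h E1 = partof g h E2"
      using main[OF E1] main[OF E2] eq k12 by (metis inj_onD)
    then have "build g h (fst (keyof g h E1)) (fst (snd (keyof g h E1))) (snd (snd (keyof g h E1))) (partof g h E1)
      = build g h (fst (keyof g h E2)) (fst (snd (keyof g h E2))) (snd (snd (keyof g h E2))) (partof g h E2)"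
      using k12 by simp
    then show "E1 = E2" using recon[OF gh, of E1] recon[OF gh, of E2]
      unfolding keyof_def partof_def by simp
  qed
  have fin': "finite (bip_graphs n m d' k)"
    by (rule finite_subset[of _ "Pow ({0..<n} \<times> {0..<m})"]) (auto simp: bip_graphs_def)
  have "card (bip_graphs n m d k) \<le> card (bip_graphs n m d' k)"
    by (rule card_inj_on_le[OF inj _ fin']) (use main in blast)
  then show ?thesis unfolding d'_def .
qed

end
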